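(* Let $S=\{(x_1,x_2)\in\mathbb{R}^2:x_1^4-x_1^2x_2+x_2^3=0\}$, $\tilde S^{o}=\{(x_0,x_1,x_2):x_1^4-x_0x_1^2x_2+x_0x_2^3=0,\ x_0>0\}$ and $\tilde S^{c}$ the same set with $x_0\ge0$. Then the linear form $X_0-X_2$ is positive on $\mathrm{conv}(\overline{\tilde S^{o}})\setminus\{0\}$, so $\mathrm{conv}(\overline{\tilde S^{o}})$ is closed and pointed, and $S$ is not closed at $\infty$, i.e. $\overline{\tilde S^{o}}\neq\tilde S^{c}$.
   Context: A closed convex cone $K$ is pointed if $K\cap(-K)=\{0\}$. $S$ is closed at $\infty$ if $\overline{\tilde S^{o}}=\tilde S^{c}$. Overline denotes closure, $\mathrm{conv}$ convex hull. *)

theory Defs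
  imports "HOL-Analysis.Analysis"
begin

definition S :: "(real \<times> real) set" where
  "S = {(x1, x2). x1^4 - x1^2 * x2 + x2^3 = 0}"

definition S_tilde_o :: "(real \<times> real \<times> real) set" where
  "S_tilde_o = {(x0, x1, x2). x1^4 - x0 * x1^2 * x2 + x0 * x2^3 = 0 \<and> x0 > 0}"

definition S_tilde_c :: "(real \<times> real \<times> real) set" where
  "S_tilde_c = {(x0, x1, x2). x1^4 - x0 * x1^2 * x2 + x0 * x2^3 = 0 \<and> x0 \<ge> 0}"

definition closed_at_infinity :: "bool" where
  "closed_at_infinity \<longleftrightarrow> closure S_tilde_o = S_tilde_c"

definition pointed :: "'a::real_vector set \<Rightarrow> bool" where
  "pointed K \<longleftrightarrow> K \<inter> uminus ` K = {0}"

end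

theory Submission
  imports Defs
begin

definition CC :: "(real \<times> real \<times> real) set" where
  "CC = {p. 0 \<le> fst p} \<inter> {p. 4 * snd (snd p) \<le> fst p} \<inter>
        {p. (fst (snd p))^4 - fst p * (fst (snd p))^2 * snd (snd p) + fst p * (snd (snd p))^3 = 0}"

lemma alg:
  fixes x0 x1 x2 :: real
  assumes "x0 > 0" "x1^4 - x0 * x1^2 * x2 + x0 * x2^3 = 0"
  shows "4 * x2 \<le> x0"
proof (cases "x2 \<le> 0")
  case True then show ?thesis using assms by linarith
next
  case False
  have e: "(2 * x1^2 - x0 * x2)^2 = x0 * x2^2 * (x0 - 4 * x2)"
  proof -
    have "(2 * x1^2 - x0 * x2)^2 = 4 * (x1^4 - x0 * x1^2 * x2 + x0 * x2^3) + x0 * x2^2 * (x0 - 4 * x2)"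
      by (simp add: algebra_simps power2_eq_square power4_eq_xxxx power3_eq_cube)
    then show ?thesis using assms(2) by simp
  qed
  have "x0 * x2^2 > 0" using False assms(1) by simp
  moreover have "x0 * x2^2 * (x0 - 4 * x2) \<ge> 0" using e[symmetric] by simp
  ultimately have "x0 - 4 * x2 \<ge> 0" by (simp add: zero_le_mult_iff)
  then show ?thesis by simp
qed

lemma closed_CC: "closed CC"
  unfolding CC_def
  by (intro closed_Int closed_Collect_le closed_Collect_eq continuous_intros)

lemma So_sub_CC: "S_tilde_o \<subseteq> CC"
  using alg by (auto simp: S_tilde_o_def CC_def)

lemma K_sub_CC: "closure S_tilde_o \<subseteq> CC"
  by (rule closure_minimal[OF So_sub_CC closed_CC])

lemma zero_in_K: "0 \<in> closure S_tilde_o"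
proof (subst closure_approachable, intro allI impI)
  fix e :: real assume e: "e > 0"
  have "(e/2, 0, 0) \<in> S_tilde_o" using e by (simp add: S_tilde_o_def)
  moreover have "dist (e/2, 0::real, 0::real) 0 < e" using e
    by (simp add: dist_norm norm_Pair zero_prod_def)
  ultimately show "\<exists>y\<in>S_tilde_o. dist y 0 < e" by blast
qed

lemma cone_So0: "cone (insert 0 S_tilde_o)"
  unfolding cone_def
proof (intro ballI allI impI)
  fix p :: "real \<times> real \<times> real" and t :: real
  assume p: "p \<in> insert 0 S_tilde_o" and t: "0 \<le> t"
  show "t *\<^sub>R p \<in> insert 0 S_tilde_o"
  proof (cases "p = 0 \<or> t = 0")
    case True then show ?thesis by auto
  next
    case False
    obtain a b c where abc: "p = (a,b,c)" by (cases p) auto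
    have h: "b^4 - a * b^2 * c + a * c^3 = 0" "0 < a" using p False abc by (auto simp: S_tilde_o_def)
    have "t > 0" using t False by simp
    have "(t*b)^4 - (t*a) * (t*b)^2 * (t*c) + (t*a) * (t*c)^3 = t^4 * (b^4 - a * b^2 * c + a * c^3)"
      by (simp add: algebra_simps power2_eq_square power4_eq_xxxx power3_eq_cube)
    then have "(t*b)^4 - (t*a) * (t*b)^2 * (t*c) + (t*a) * (t*c)^3 = 0" using h by simp
    moreover have "0 < t * a" using h \<open>t>0\<close> by simp
    ultimately show ?thesis using abc by (simp add: S_tilde_o_def)
  qed
qed

lemma cone_K: "cone (closure S_tilde_o)"
proof -
  have "cone (closure (insert 0 S_tilde_o))" using cone_So0 by (rule cone_closure)
  moreover have "closure (insert 0 S_tilde_o) = closure S_tilde_o"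
    using zero_in_K by (simp add: closure_insert insert_absorb)
  ultimately show ?thesis by simp
qed

definition ff :: "real \<times> real \<times> real \<Rightarrow> real" where
  "ff p = fst p - snd (snd p)"

lemma ff_scale: "ff (c *\<^sub>R p) = c * ff p"
  by (simp add: ff_def algebra_simps)

lemma ff_minus: "ff (- p) = - ff p"
  by (simp add: ff_def)

lemma ff_pos_K: "p \<in> closure S_tilde_o \<Longrightarrow> p \<noteq> 0 \<Longrightarrow> ff p > 0"
proof -
  assume p: "p \<in> closure S_tilde_o" "p \<noteq> 0"
  obtain a b c where abc: "p = (a, b, c)" by (cases p) auto
  have h: "0 \<le> a" "4 * c \<le> a" "b^4 - a * b^2 * c + a * c^3 = 0"
    using K_sub_CC p(1) abc by (auto simp: CC_def)
  show "ff p > 0"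
  proof (rule ccontr)
    assume "\<not> ff p > 0"
    then have "a \<le> c" using abc by (simp add: ff_def)
    then have "a = 0" "c = 0" using h by linarith+
    then have "b^4 = 0" using h by simp
    then have "b = 0" by simp
    then show False using p(2) abc \<open>a = 0\<close> \<open>c = 0\<close> by (simp add: zero_prod_def)
  qed
qed

definition BB where "BB = closure S_tilde_o \<inter> {p. ff p = 1}"

lemma BB_bounds:
  assumes "p \<in> BB"
  shows "p \<in> {-2..2} \<times> {-2..2} \<times> {-2..(2::real)}"
proof -
  obtain a b c where abc: "p = (a, b, c)" by (cases p) auto
  have h: "0 \<le> a" "4 * c \<le> a" "b^4 - a * b^2 * c + a * c^3 = 0" "a - c = 1"
    using K_sub_CC assms abc by (auto simp: CC_def BB_def ff_def)
  have a: "a \<le> 4/3" "c \<ge> -1" "c \<le> 1/3" using h by linarith+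
  have q1: "\<bar>a * c\<bar> \<le> 4/3"
  proof -
    have "\<bar>a * c\<bar> = \<bar>a\<bar> * \<bar>c\<bar>" by (simp add: abs_mult)
    also have "\<dots> \<le> (4/3) * 1" using a h(1) by (intro mult_mono) auto
    finally show ?thesis by simp
  qed
  have q2: "\<bar>a * c^3\<bar> \<le> 4/3"
  proof -
    have "\<bar>c\<bar> \<le> 1" using a by linarith
    then have "\<bar>c\<bar>^3 \<le> 1" by (simp add: power_le_one)
    have "\<bar>a * c^3\<bar> = \<bar>a\<bar> * \<bar>c\<bar>^3" by (simp add: abs_mult power_abs)
    also have "\<dots> \<le> (4/3) * 1" using a h(1) \<open>\<bar>c\<bar>^3 \<le> 1\<close> by (intro mult_mono) auto
    finally show ?thesis by simp
  qed
  define t where "t = b^2"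
  have t0: "t \<ge> 0" by (simp add: t_def)
  have "t^2 = (a*c) * t - a * c^3" using h(3) by (simp add: t_def power2_eq_square power4_eq_xxxx algebra_simps)
  also have "\<dots> \<le> (4/3) * t + 4/3"
  proof -
    have "(a*c) * t \<le> (4/3) * t" using q1 t0 by (metis abs_ge_self mult_right_mono order_trans)
    moreover have "- (a * c^3) \<le> 4/3" using q2 by linarith
    ultimately show ?thesis by linarith
  qed
  finally have "t^2 \<le> (4/3) * t + 4/3" .
  then have "(t - 2) * (3 * t + 2) \<le> 0" by (simp add: algebra_simps power2_eq_square)
  moreover have "3 * t + 2 > 0" using t0 by simp
  ultimately have "t \<le> 2" by (simp add: mult_le_0_iff)
  then have "b^2 < 2^2" by (simp add: t_def)
  then have "\<bar>b\<bar> < 2" using power2_less_imp_less[of "\<bar>b\<bar>" 2] by simp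
  then have "-2 \<le> b" "b \<le> 2" by linarith+
  moreover have "-2 \<le> a" "a \<le> 2" "-2 \<le> c" "c \<le> 2" using a h by linarith+
  ultimately show ?thesis using abc by simp
qed

lemma compact_BB: "compact BB"
unfolding compact_eq_bounded_closed
proof
  show "bounded BB"
    by (rule bounded_subset[OF _ subsetI[OF BB_bounds]]) (intro bounded_Times bounded_closed_interval)
  show "closed BB" unfolding BB_def ff_def
    by (intro closed_Int closed_closure closed_Collect_eq continuous_intros)
qed

lemma convex_ff1: "convex {p. ff p = 1}"
  unfolding convex_def ff_def by (auto simp: algebra_simps)

lemma BB_ne: "(1,0,0) \<in> BB"
proof -
  have "(1,0,0) \<in> S_tilde_o" by (simp add: S_tilde_o_def)
  then show ?thesis unfolding BB_def ff_def using closure_subset by auto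
qed

lemma hull_eq: "convex hull (closure S_tilde_o) = conic hull (convex hull BB)"
proof
  show "convex hull (closure S_tilde_o) \<subseteq> conic hull (convex hull BB)"
  proof (rule hull_minimal)
    show "convex (conic hull (convex hull BB))" by (simp add: convex_conic_hull)
    show "closure S_tilde_o \<subseteq> conic hull (convex hull BB)"
    proof
      fix x assume x: "x \<in> closure S_tilde_o"
      show "x \<in> conic hull (convex hull BB)"
      proof (cases "x = 0")
        case True then show ?thesis using BB_ne by auto
      next
        case False
        then have fp: "ff x > 0" using ff_pos_K x by blast
        have "inverse (ff x) *\<^sub>R x \<in> closure S_tilde_o"
          using cone_K x fp by (simp add: cone_def)
        moreover have "ff (inverse (ff x) *\<^sub>R x) = 1" using fp by (simp add: ff_scale)
        ultimately have "inverse (ff x) *\<^sub>R x \<in> convex hull BB"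
          by (simp add: BB_def hull_inc)
        moreover have "x = ff x *\<^sub>R (inverse (ff x) *\<^sub>R x)" using fp by simp
        ultimately have "\<exists>c y. x = c *\<^sub>R y \<and> 0 \<le> c \<and> y \<in> convex hull BB"
          using fp by (intro exI[of _ "ff x"] exI[of _ "inverse (ff x) *\<^sub>R x"] conjI) auto
        then show ?thesis unfolding conic_hull_explicit mem_Collect_eq by simp
      qed
    qed
  qed
  show "conic hull (convex hull BB) \<subseteq> convex hull (closure S_tilde_o)"
  proof (rule hull_minimal)
    show "convex hull BB \<subseteq> convex hull (closure S_tilde_o)"
      by (rule hull_mono) (auto simp: BB_def)
    show "conic (convex hull (closure S_tilde_o))"
      using cone_convex_hull[OF cone_K] by (simp add: cone_def conic_def)
  qed
qed

lemma convBB_ff: "convex hull BB \<subseteq> {p. ff p = 1}"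
  by (rule hull_minimal) (auto simp: BB_def convex_ff1)

lemma pos_main: "x \<in> convex hull (closure S_tilde_o) \<Longrightarrow> x \<noteq> 0 \<Longrightarrow> ff x > 0"
proof -
  assume x: "x \<in> convex hull (closure S_tilde_o)" "x \<noteq> 0"
  then obtain c y where cy: "x = c *\<^sub>R y" "0 \<le> c" "y \<in> convex hull BB"
    unfolding hull_eq conic_hull_explicit by blast
  have "ff y = 1" using cy convBB_ff by auto
  then have "ff x = c" using cy by (simp add: ff_scale)
  moreover have "c \<noteq> 0" using cy x by auto
  ultimately show ?thesis using cy by simp
qed

theorem mainTheorem20:
  shows "(\<forall>x0 x1 x2. (x0, x1, x2) \<in> convex hull (closure S_tilde_o) - {0} \<longrightarrow> x0 - x2 > 0)
     \<and> cone (convex hull (closure S_tilde_o))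
     \<and> closed (convex hull (closure S_tilde_o))
     \<and> pointed (convex hull (closure S_tilde_o))
     \<and> \<not> closed_at_infinity"
proof (intro conjI)
  show "\<forall>x0 x1 x2. (x0, x1, x2) \<in> convex hull (closure S_tilde_o) - {0} \<longrightarrow> x0 - x2 > 0"
  proof (intro allI impI)
    fix x0 x1 x2 :: real
    assume h: "(x0, x1, x2) \<in> convex hull (closure S_tilde_o) - {0}"
    then have "ff (x0, x1, x2) > 0" using pos_main by blast
    then show "x0 - x2 > 0" by (simp add: ff_def)
  qed
  show "cone (convex hull (closure S_tilde_o))" by (rule cone_convex_hull[OF cone_K])
  show "closed (convex hull (closure S_tilde_o))"
    unfolding hull_eq
  proof (rule closed_conic_hull, rule disjI2, rule conjI)
    show "compact (convex hull BB)" by (rule compact_convex_hull[OF compact_BB])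
    show "0 \<notin> convex hull BB" proof
      assume "0 \<in> convex hull BB"
      then have "ff 0 = 1" using convBB_ff by blast
      then show False by (simp add: ff_def)
    qed
  qed
  show "pointed (convex hull (closure S_tilde_o))"
    unfolding pointed_def
  proof
    show "convex hull (closure S_tilde_o) \<inter> uminus ` (convex hull (closure S_tilde_o)) \<subseteq> {0}"
    proof
      fix x assume x: "x \<in> convex hull (closure S_tilde_o) \<inter> uminus ` (convex hull (closure S_tilde_o))"
      show "x \<in> {0}"
      proof (rule ccontr)
        assume "x \<notin> {0}"
        then have "x \<noteq> 0" by simp
        from x obtain y where y: "y \<in> convex hull (closure S_tilde_o)" "x = - y" by blast
        have "ff x > 0" using x \<open>x \<noteq> 0\<close> pos_main by blast
        moreover have "y \<noteq> 0" using y \<open>x \<noteq> 0\<close> by simp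
        then have "ff y > 0" using y(1) pos_main by blast
        moreover have "ff x = - ff y" using y(2) ff_minus by simp
        ultimately show False by linarith
      qed
    qed
    have "0 \<in> convex hull (closure S_tilde_o)" by (rule hull_inc[OF zero_in_K])
    then show "{0} \<subseteq> convex hull (closure S_tilde_o) \<inter> uminus ` (convex hull (closure S_tilde_o))"
      using image_eqI[of 0 uminus 0 "convex hull (closure S_tilde_o)"] by simp
  qed
  show "\<not> closed_at_infinity"
  proof
    assume "closed_at_infinity"
    then have "closure S_tilde_o = S_tilde_c" by (simp add: closed_at_infinity_def)
    moreover have "(0,0,1) \<in> S_tilde_c" by (simp add: S_tilde_c_def)
    ultimately have "(0,0,1) \<in> CC" using K_sub_CC by auto
    then show False by (simp add: CC_def)
  qed
qed

end
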